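(* Assume PONO holds. Let $Q$ be a finite nonempty set of tables, $\mathbf{W}\in\mathbb{R}_{\ge0}^{\mathbb{O}}$ a weight vector and $\alpha_U\ge1$. Run RTA with internal precision $\alpha_i=\alpha_U^{1/|Q|}$ and let $p$ be a plan in $\mathcal{P}^Q$ minimizing $C_{\mathbf{W}}(\mathbf{c}(p))$. Then $C_{\mathbf{W}}(\mathbf{c}(p))\le\alpha_U\cdot\min_{p'\in\mathcal{A}(Q)}C_{\mathbf{W}}(\mathbf{c}(p'))$, i.e. $p$ is an $\alpha_U$-approximate solution of the weighted MOQO instance $\langle Q,\mathbf{W}\rangle$.
   Context: Setting as follows. A finite set $\mathbb{O}$ of $l\ge1$ objectives, a finite set $\mathbb{J}$ of join operators; each table $t$ has a finite nonempty set $\mathcal{A}(\{t\})$ of scan plans; for $|q|\ge2$, $\mathcal{A}(q)$ is the set of plans $\mathrm{Combine}(j,p_1,p_2)$ with $q=q_1\dot\cup q_2$ nonempty parts, $j\in\mathbb{J}$, $p_i\in\mathcal{A}(q_i)$. Each plan has cost vector $\mathbf{c}(p)\in\mathbb{R}_{\ge0}^{\mathbb{O}}$; $C_{\mathbf{W}}(\mathbf{c})=\sum_{o}\mathbf{c}^o\mathbf{W}^o$. $\mathbf{c}_1\preceq\mathbf{c}_2$ iff $\mathbf{c}_1^o\le\mathbf{c}_2^o$ for all $o$; $\mathbf{c}_1\preceq_\alpha\mathbf{c}_2$ iff $\mathbf{c}_1^o\le\alpha\mathbf{c}_2^o$ for all $o$. PONO: for all $\alpha\ge1$, $j$, and plans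 with $\mathbf{c}(p_L^* )\preceq_\alpha\mathbf{c}(p_L)$, $\mathbf{c}(p_R^* )\preceq_\alpha\mathbf{c}(p_R)$ ($p_L,p_L^*$ for the same table set, likewise $p_R,p_R^*$), $\mathbf{c}(\mathrm{Combine}(j,p_L^*,p_R^* ))\preceq_\alpha\mathbf{c}(\mathrm{Combine}(j,p_L,p_R))$. $\mathrm{Prune}(\mathcal{P},p_N,\alpha_i)$: if no $p\in\mathcal{P}$ has $\mathbf{c}(p)\preceq_{\alpha_i}\mathbf{c}(p_N)$, delete all $p\in\mathcal{P}$ with $\mathbf{c}(p_N)\preceq\mathbf{c}(p)$ and insert $p_N$; else do nothing. RTA: for each $t\in Q$, $\mathcal{P}^{\{t\}}$ starts empty and $\mathrm{Prune}$ is called with every scan plan of $t$; then for $k=2,\dots,|Q|$ and each $q\subseteq Q$ with $|q|=k$, $\mathcal{P}^q$ starts empty and $\mathrm{Prune}(\mathcal{P}^q,\mathrm{Combine}(j,p_1,p_2),\alpha_i)$ is called for all splits $q=q_1\dot\cup q_2$ into nonempty parts, all $p_1\in\mathcal{P}^{q_1}$, $p_2\in\mathcal{P}^{q_2}$, $j\in\mathbb{J}$. *)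

theory Defs
  imports Complex_Main
begin

text \<open>Query plans: a scan plan of table t (with scan-operator/plan identifier s),
  or a join of two sub-plans with join operator j.\<close>
datatype ('t, 's, 'j) plan = Scan 't 's | Combine 'j "('t, 's, 'j) plan" "('t, 's, 'j) plan"

definition dom_le :: "('o \<Rightarrow> real) \<Rightarrow> ('o \<Rightarrow> real) \<Rightarrow> bool" where
  "dom_le c1 c2 \<longleftrightarrow> (\<forall>ob. c1 ob \<le> c2 ob)"

definition approx_dom :: "real \<Rightarrow> ('o \<Rightarrow> real) \<Rightarrow> ('o \<Rightarrow> real) \<Rightarrow> bool" where
  "approx_dom \<alpha> c1 c2 \<longleftrightarrow> (\<forall>ob. c1 ob \<le> \<alpha> * c2 ob)"

definition weighted_cost :: "('o::finite \<Rightarrow> real) \<Rightarrow> ('o \<Rightarrow> real) \<Rightarrow> real" where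
  "weighted_cost W c = (\<Sum>ob\<in>UNIV. c ob * W ob)"

inductive plan_for :: "('t \<Rightarrow> 's set) \<Rightarrow> 'j set \<Rightarrow> 't set \<Rightarrow> ('t, 's, 'j) plan \<Rightarrow> bool"
  for scans J where
  scan: "s \<in> scans t \<Longrightarrow> plan_for scans J {t} (Scan t s)"
| comb: "\<lbrakk> j \<in> J; q1 \<noteq> {}; q2 \<noteq> {}; q1 \<inter> q2 = {};
           plan_for scans J q1 p1; plan_for scans J q2 p2 \<rbrakk>
         \<Longrightarrow> plan_for scans J (q1 \<union> q2) (Combine j p1 p2)"

definition PONO :: "('t \<Rightarrow> 's set) \<Rightarrow> 'j set \<Rightarrow> (('t, 's, 'j) plan \<Rightarrow> 'o \<Rightarrow> real) \<Rightarrow> bool" where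
  "PONO scans J c \<longleftrightarrow>
     (\<forall>\<alpha>\<ge>1. \<forall>j\<in>J. \<forall>pL pLs pR pRs.
        (\<exists>qL. plan_for scans J qL pL \<and> plan_for scans J qL pLs) \<longrightarrow>
        (\<exists>qR. plan_for scans J qR pR \<and> plan_for scans J qR pRs) \<longrightarrow>
        approx_dom \<alpha> (c pLs) (c pL) \<longrightarrow> approx_dom \<alpha> (c pRs) (c pR) \<longrightarrow>
        approx_dom \<alpha> (c (Combine j pLs pRs)) (c (Combine j pL pR)))"

definition Prune :: "(('t, 's, 'j) plan \<Rightarrow> 'o \<Rightarrow> real) \<Rightarrow> real \<Rightarrow>
    ('t, 's, 'j) plan set \<Rightarrow> ('t, 's, 'j) plan \<Rightarrow> ('t, 's, 'j) plan set" where
  "Prune c \<alpha> P pN =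
     (if \<exists>p\<in>P. approx_dom \<alpha> (c p) (c pN) then P
      else insert pN {p \<in> P. \<not> dom_le (c pN) (c p)})"

text \<open>Candidate plans that RTA feeds into Prune for the table set q, given the
  already computed pruned sets P of strictly smaller table sets.\<close>
definition candidates :: "('t \<Rightarrow> 's set) \<Rightarrow> 'j set \<Rightarrow> ('t set \<Rightarrow> ('t, 's, 'j) plan set) \<Rightarrow>
    't set \<Rightarrow> ('t, 's, 'j) plan set" where
  "candidates scans J P q =
     (if card q = 1 then {Scan t s | t s. q = {t} \<and> s \<in> scans t}
      else {Combine j p1 p2 | j q1 q2 p1 p2. j \<in> J \<and> q1 \<noteq> {} \<and> q2 \<noteq> {} \<and>
              q1 \<inter> q2 = {} \<and> q1 \<union> q2 = q \<and> p1 \<in> P q1 \<and> p2 \<in> P q2})"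

text \<open>P is a possible outcome of RTA on Q with internal precision \<alpha>: for every nonempty
  q \<subseteq> Q, P q is obtained from the empty set by calling Prune with every candidate
  plan exactly once, in some (arbitrary) order.\<close>
definition RTA_result :: "('t \<Rightarrow> 's set) \<Rightarrow> 'j set \<Rightarrow> (('t, 's, 'j) plan \<Rightarrow> 'o \<Rightarrow> real) \<Rightarrow>
    't set \<Rightarrow> real \<Rightarrow> ('t set \<Rightarrow> ('t, 's, 'j) plan set) \<Rightarrow> bool" where
  "RTA_result scans J c Q \<alpha> P \<longleftrightarrow>
     (\<forall>q. q \<subseteq> Q \<and> q \<noteq> {} \<longrightarrow>
        (\<exists>xs. distinct xs \<and> set xs = candidates scans J P q \<and>
              P q = foldl (Prune c \<alpha>) {} xs))"

end

theory Submission
  imports Defs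
begin

lemma approx_refl: "a \<ge> 1 \<Longrightarrow> (\<And>ob. c ob \<ge> (0::real)) \<Longrightarrow> approx_dom a c c"
  unfolding approx_dom_def by (metis mult_le_cancel_right1 order_less_le_trans not_le order.refl mult_1 zero_le_one)

lemma approx_trans: "approx_dom a c1 c2 \<Longrightarrow> approx_dom b c2 c3 \<Longrightarrow> a \<ge> 0
   \<Longrightarrow> approx_dom (a*b) c1 c3"
  unfolding approx_dom_def
proof (intro allI)
  fix ob assume h: "\<forall>ob. c1 ob \<le> a * c2 ob" "\<forall>ob. c2 ob \<le> b * c3 ob" "a \<ge> 0"
  have "c1 ob \<le> a * c2 ob" using h by auto
  also have "\<dots> \<le> a * (b * c3 ob)" using h by (simp add: mult_left_mono)
  finally show "c1 ob \<le> a * b * c3 ob" by simp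
qed

lemma approx_mono: "approx_dom a c1 c2 \<Longrightarrow> a \<le> b \<Longrightarrow> (\<And>ob. c2 ob \<ge> (0::real))
   \<Longrightarrow> approx_dom b c1 c2"
  unfolding approx_dom_def by (meson mult_right_mono order_trans)

lemma foldl_sub: "foldl (Prune c a) P0 xs \<subseteq> P0 \<union> set xs"
proof (induction xs arbitrary: P0)
  case Nil then show ?case by simp
next
  case (Cons x xs)
  have "Prune c a P0 x \<subseteq> P0 \<union> {x}" unfolding Prune_def by auto
  with Cons[of "Prune c a P0 x"] show ?case by auto
qed

lemma foldl_cov:
  assumes a1: "a \<ge> 1" and cn: "\<And>p ob. c p ob \<ge> (0::real)"
  shows "(\<forall>y\<in>A. \<exists>p\<in>P0. approx_dom a (c p) (c y)) \<Longrightarrow>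
     (\<forall>y\<in>A \<union> set xs. \<exists>p\<in>foldl (Prune c a) P0 xs. approx_dom a (c p) (c y))"
proof (induction xs arbitrary: A P0)
  case Nil then show ?case by simp
next
  case (Cons x xs)
  have step: "\<forall>y\<in>A \<union> {x}. \<exists>p\<in>Prune c a P0 x. approx_dom a (c p) (c y)"
  proof (cases "\<exists>p\<in>P0. approx_dom a (c p) (c x)")
    case True
    then show ?thesis using Cons.prems unfolding Prune_def by auto
  next
    case False
    have e: "Prune c a P0 x = insert x {p \<in> P0. \<not> dom_le (c x) (c p)}"
      using False unfolding Prune_def by auto
    show ?thesis
    proof
      fix y assume y: "y \<in> A \<union> {x}"
      show "\<exists>p\<in>Prune c a P0 x. approx_dom a (c p) (c y)"
      proof (cases "y = x")
        case True then show ?thesis using e approx_refl[OF a1, of "c x"] cn by auto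
      next
        case False
        then have "y \<in> A" using y by auto
        then obtain p where p: "p \<in> P0" "approx_dom a (c p) (c y)" using Cons.prems by auto
        show ?thesis
        proof (cases "dom_le (c x) (c p)")
          case True
          then have "approx_dom a (c x) (c y)" using p(2)
            unfolding dom_le_def approx_dom_def by (meson order_trans)
          then show ?thesis using e by auto
        next
          case False then show ?thesis using e p by auto
        qed
      qed
    qed
  qed
  from Cons.IH[OF step] show ?case by auto
qed

lemma foldl_cov0:
  assumes "a \<ge> 1" "\<And>p ob. c p ob \<ge> (0::real)" "y \<in> set xs"
  shows "\<exists>p\<in>foldl (Prune c a) {} xs. approx_dom a (c p) (c y)"
proof -
  have "\<forall>y\<in>{} \<union> set xs. \<exists>p\<in>foldl (Prune c a) {} xs. approx_dom a (c p) (c y)"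
    by (rule foldl_cov[OF assms(1,2)]) simp
  then show ?thesis using assms(3) by simp
qed

lemma plan_for_finite: "plan_for scans J q p \<Longrightarrow> finite q \<and> q \<noteq> {}"
  by (induction rule: plan_for.induct) auto

theorem corollary1:
  fixes scans :: "'t \<Rightarrow> 's set"
    and J :: "'j set"
    and c :: "('t, 's, 'j) plan \<Rightarrow> 'o::finite \<Rightarrow> real"
    and Q :: "'t set"
    and W :: "'o \<Rightarrow> real"
    and \<alpha>U :: real
    and P :: "'t set \<Rightarrow> ('t, 's, 'j) plan set"
    and p :: "('t, 's, 'j) plan"
  assumes scans_fin: "\<And>t. finite (scans t)"
    and scans_ne: "\<And>t. scans t \<noteq> {}"
    and J_fin: "finite J"
    and c_nonneg: "\<And>p ob. c p ob \<ge> 0"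
    and pono: "PONO scans J c"
    and Q_fin: "finite Q" and Q_ne: "Q \<noteq> {}"
    and W_nonneg: "\<And>ob. W ob \<ge> 0"
    and \<alpha>U_ge: "\<alpha>U \<ge> 1"
    and run: "RTA_result scans J c Q (\<alpha>U powr (1 / real (card Q))) P"
    and p_in: "p \<in> P Q"
    and p_min: "\<forall>p'\<in>P Q. weighted_cost W (c p) \<le> weighted_cost W (c p')"
  shows "\<forall>p'. plan_for scans J Q p' \<longrightarrow> weighted_cost W (c p) \<le> \<alpha>U * weighted_cost W (c p')"
proof -
  define a where "a = \<alpha>U powr (1 / real (card Q))"
  have a1: "a \<ge> 1" unfolding a_def using \<alpha>U_ge by (simp add: ge_one_powr_ge_zero)
  have cardQ: "card Q > 0" using Q_fin Q_ne by (simp add: card_gt_0_iff)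
  have aQ: "a ^ card Q = \<alpha>U" unfolding a_def using \<alpha>U_ge cardQ
    by (simp add: powr_realpow[symmetric] powr_powr)
  have runq: "\<And>q. q \<subseteq> Q \<Longrightarrow> q \<noteq> {} \<Longrightarrow> \<exists>xs. distinct xs \<and> set xs = candidates scans J P q
      \<and> P q = foldl (Prune c a) {} xs"
    using run unfolding RTA_result_def a_def by blast
  have Psub: "\<And>q. q \<subseteq> Q \<Longrightarrow> q \<noteq> {} \<Longrightarrow> P q \<subseteq> candidates scans J P q"
  proof -
    fix q assume "q \<subseteq> Q" "q \<noteq> {}"
    then obtain xs where "set xs = candidates scans J P q" "P q = foldl (Prune c a) {} xs"
      using runq by blast
    then show "P q \<subseteq> candidates scans J P q" using foldl_sub[of c a "{}" xs] by simp
  qed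
  have plans: "\<forall>q. card q = n \<longrightarrow> q \<subseteq> Q \<longrightarrow> q \<noteq> {} \<longrightarrow> (\<forall>x\<in>P q. plan_for scans J q x)" for n
  proof (induction n rule: less_induct)
    case (less n)
    show ?case
    proof (intro allI impI ballI)
      fix q x assume q: "card q = n" "q \<subseteq> Q" "q \<noteq> {}" and x: "x \<in> P q"
      have xc: "x \<in> candidates scans J P q" using Psub q x by auto
      have fq: "finite q" using q Q_fin finite_subset by auto
      show "plan_for scans J q x"
      proof (cases "card q = 1")
        case True
        then show ?thesis using xc unfolding candidates_def by (auto intro: plan_for.scan)
      next
        case False
        then obtain j q1 q2 p1 p2 where d: "x = Combine j p1 p2" "j \<in> J" "q1 \<noteq> {}" "q2 \<noteq> {}"
          "q1 \<inter> q2 = {}" "q1 \<union> q2 = q" "p1 \<in> P q1" "p2 \<in> P q2"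
          using xc False unfolding candidates_def by (simp only: if_False) blast
        have f1: "finite q1" "finite q2" using fq d by auto
        have c: "card q = card q1 + card q2" using d f1 card_Un_disjoint by metis
        have "card q1 > 0" "card q2 > 0" using f1 d by (auto simp: card_gt_0_iff)
        then have "card q1 < n" "card q2 < n" using c q by auto
        then have "plan_for scans J q1 p1" "plan_for scans J q2 p2"
        proof -
          have "q1 \<subseteq> Q" "q2 \<subseteq> Q" using d q by auto
          then show "plan_for scans J q1 p1" "plan_for scans J q2 p2"
            using less.IH[OF \<open>card q1 < n\<close>] less.IH[OF \<open>card q2 < n\<close>] d by auto
        qed
        then show ?thesis using d plan_for.comb by metis
      qed
    qed
  qed
  have plans': "\<And>q x. q \<subseteq> Q \<Longrightarrow> q \<noteq> {} \<Longrightarrow> x \<in> P q \<Longrightarrow> plan_for scans J q x"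
    using plans by blast
  have cov: "plan_for scans J q p' \<Longrightarrow> q \<subseteq> Q \<Longrightarrow> \<exists>ps\<in>P q. approx_dom (a ^ card q) (c ps) (c p')"
    for q p'
  proof (induction rule: plan_for.induct)
    case (scan s t)
    obtain xs where xs: "set xs = candidates scans J P {t}" "P {t} = foldl (Prune c a) {} xs"
      using runq[of "{t}"] scan by auto
    have "Scan t s \<in> set xs" using xs scan unfolding candidates_def by auto
    then show ?case using foldl_cov0[where a=a and c=c, OF a1 c_nonneg] xs by auto
  next
    case (comb j q1 q2 p1 p2)
    have f1: "finite q1" "finite q2" using comb Q_fin finite_subset by auto
    have cq: "card (q1 \<union> q2) = card q1 + card q2" using comb f1 card_Un_disjoint by metis
    have pos: "card q1 > 0" "card q2 > 0" using f1 comb by (auto simp: card_gt_0_iff)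
    obtain s1 where s1: "s1 \<in> P q1" "approx_dom (a ^ card q1) (c s1) (c p1)" using comb by auto
    obtain s2 where s2: "s2 \<in> P q2" "approx_dom (a ^ card q2) (c s2) (c p2)" using comb by auto
    define b where "b = a ^ (card (q1 \<union> q2) - 1)"
    have b1: "b \<ge> 1" unfolding b_def using a1 by simp
    have "a ^ card q1 \<le> b" unfolding b_def using a1 cq pos by (intro power_increasing) auto
    then have s1': "approx_dom b (c s1) (c p1)" using approx_mono s1 c_nonneg by blast
    have "a ^ card q2 \<le> b" unfolding b_def using a1 cq pos by (intro power_increasing) auto
    then have s2': "approx_dom b (c s2) (c p2)" using approx_mono s2 c_nonneg by blast
    have ps1: "plan_for scans J q1 s1" using plans' s1 comb by auto
    have ps2: "plan_for scans J q2 s2" using plans' s2 comb by auto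
    have cmb: "approx_dom b (c (Combine j s1 s2)) (c (Combine j p1 p2))"
    proof -
      have "\<forall>\<alpha>\<ge>1. \<forall>j\<in>J. \<forall>pL pLs pR pRs.
        (\<exists>qL. plan_for scans J qL pL \<and> plan_for scans J qL pLs) \<longrightarrow>
        (\<exists>qR. plan_for scans J qR pR \<and> plan_for scans J qR pRs) \<longrightarrow>
        approx_dom \<alpha> (c pLs) (c pL) \<longrightarrow> approx_dom \<alpha> (c pRs) (c pR) \<longrightarrow>
        approx_dom \<alpha> (c (Combine j pLs pRs)) (c (Combine j pL pR))" using pono unfolding PONO_def .
      then have "\<And>pL pLs pR pRs.
        (\<exists>qL. plan_for scans J qL pL \<and> plan_for scans J qL pLs) \<longrightarrow>
        (\<exists>qR. plan_for scans J qR pR \<and> plan_for scans J qR pRs) \<longrightarrow>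
        approx_dom b (c pLs) (c pL) \<longrightarrow> approx_dom b (c pRs) (c pR) \<longrightarrow>
        approx_dom b (c (Combine j pLs pRs)) (c (Combine j pL pR))" using b1 comb(1) by blast
      from this[of p1 s1 p2 s2] show ?thesis using comb(5,6) ps1 ps2 s1' s2' by blast
    qed
    obtain xs where xs: "set xs = candidates scans J P (q1 \<union> q2)"
        "P (q1 \<union> q2) = foldl (Prune c a) {} xs"
      using runq[of "q1 \<union> q2"] comb by auto
    have n1: "card (q1 \<union> q2) \<noteq> 1" using cq pos by auto
    have "Combine j s1 s2 \<in> candidates scans J P (q1 \<union> q2)"
      unfolding candidates_def if_not_P[OF n1]
      using comb(1,2,3,4) s1(1) s2(1) by blast
    then have inx: "Combine j s1 s2 \<in> set xs" using xs(1) by simp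
    obtain ps where ps: "ps \<in> P (q1 \<union> q2)" "approx_dom a (c ps) (c (Combine j s1 s2))"
      using foldl_cov0[where a=a and c=c, OF a1 c_nonneg inx] xs(2) by auto
    have "approx_dom (a * b) (c ps) (c (Combine j p1 p2))"
      using approx_trans[OF ps(2) cmb] a1 by simp
    moreover have "a * b = a ^ card (q1 \<union> q2)"
    proof -
      have "card (q1 \<union> q2) = Suc (card (q1 \<union> q2) - 1)" using cq pos by simp
      then show ?thesis unfolding b_def by (metis power_Suc)
    qed
    ultimately show ?case using ps by auto
  qed
  show ?thesis
  proof (intro allI impI)
    fix p' assume "plan_for scans J Q p'"
    then obtain ps where ps: "ps \<in> P Q" "approx_dom \<alpha>U (c ps) (c p')" using cov[of Q p'] aQ by auto
    have "weighted_cost W (c ps) \<le> \<alpha>U * weighted_cost W (c p')"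
      unfolding weighted_cost_def sum_distrib_left
      using ps(2) W_nonneg unfolding approx_dom_def
      by (intro sum_mono) (metis mult.assoc mult_right_mono)
    then show "weighted_cost W (c p) \<le> \<alpha>U * weighted_cost W (c p')"
      using p_min ps(1) by fastforce
  qed
qed

end
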